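(* Let $x\in\mathbb X$ and $N\Subset\mathbb X\setminus\{x\}$. Then \[ |\gamma(x,N)|\,\alpha^N\le\sum_{\substack{\mathcal X\subset\mathbf F(x):\\ \left(\bigcup_{X\in\mathcal X}X\right)\setminus\{x\}=N}}\ \prod_{X\in\mathcal X}\Big(\max\Big\{|W(X)|,\ 1+|W(X)-1|\alpha^S\ \Big|\ \varnothing\neq S\subset X\setminus\{x\}\Big\}-1\Big). \]
   Context: $\mathbb X$ is a finite or countably infinite set, $X\Subset\mathbb X$ means finite subset, $\mathbf F$ is the set of finite subsets, $\mathbf F(x)=\{X\Subset\mathbb X\mid x\in X\}$. Fix $W:\mathbf F\to\mathbb C$, $r:\mathbb X\to[0,1)$, $\alpha=\frac r{1-r}$, $\alpha^S=\prod_{s\in S}\alpha(s)$. Boltzmann factor conditioned on $B$: with $W(X\mid B)=\prod_{C\subset B}W(X\cup C)$ if $X\cap B=\varnothing$, $0$ if $X=\{y\}$ with $y\in B$, $1$ otherwise, set $\kappa(X\mid B)=\prod_{\varnothing\neq S\subset X}W(S\mid B)$ and $\kappa(x\mid B)=\kappa(\{x\}\mid B)$. Kernel: $\gamma(x,N)=\gamma(x,N\mid\varnothing)$ where $\gamma(x,N\mid B)=\sum_{M\subset N}(-1)^{|N\setminus M|}\kappa(x\mid B\cup M)$. A maximum $\max\{a,\ b_S\mid S\in\mathcal S\}$ denotes the maximum of $a$ and all $b_S$ (equal to $a$ if $\mathcal S=\varnothing$). The empty collection $\mathcal X=\varnothing$ has union $\varnothing$; empty products equal $1$. *)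

theory Defs
  imports "HOL-Analysis.Analysis" "HOL-Library.Countable"
begin

definition alpha :: "('a \<Rightarrow> real) \<Rightarrow> 'a \<Rightarrow> real" where
  "alpha r s = r s / (1 - r s)"

definition alpha_pow :: "('a \<Rightarrow> real) \<Rightarrow> 'a set \<Rightarrow> real" where
  "alpha_pow r S = (\<Prod>s\<in>S. alpha r s)"

definition Wcond :: "('a set \<Rightarrow> complex) \<Rightarrow> 'a set \<Rightarrow> 'a set \<Rightarrow> complex" where
  "Wcond W X B =
     (if X \<inter> B = {} then (\<Prod>C\<in>Pow B. W (X \<union> C))
      else if (\<exists>y\<in>B. X = {y}) then 0 else 1)"

definition kappa :: "('a set \<Rightarrow> complex) \<Rightarrow> 'a set \<Rightarrow> 'a set \<Rightarrow> complex" where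
  "kappa W X B = (\<Prod>S\<in>{S. S \<subseteq> X \<and> S \<noteq> {}}. Wcond W S B)"

definition kappa_pt :: "('a set \<Rightarrow> complex) \<Rightarrow> 'a \<Rightarrow> 'a set \<Rightarrow> complex" where
  "kappa_pt W x B = kappa W {x} B"

definition gamma_cond :: "('a set \<Rightarrow> complex) \<Rightarrow> 'a \<Rightarrow> 'a set \<Rightarrow> 'a set \<Rightarrow> complex" where
  "gamma_cond W x N B =
     (\<Sum>M\<in>Pow N. (-1) ^ card (N - M) * kappa_pt W x (B \<union> M))"

definition gamma :: "('a set \<Rightarrow> complex) \<Rightarrow> 'a \<Rightarrow> 'a set \<Rightarrow> complex" where
  "gamma W x N = gamma_cond W x N {}"

definition Fx :: "'a \<Rightarrow> 'a set set" where
  "Fx x = {X. finite X \<and> x \<in> X}"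

definition maxterm :: "('a set \<Rightarrow> complex) \<Rightarrow> ('a \<Rightarrow> real) \<Rightarrow> 'a \<Rightarrow> 'a set \<Rightarrow> real" where
  "maxterm W r x X =
     Max (insert (cmod (W X))
          ((\<lambda>S. 1 + cmod (W X - 1) * alpha_pow r S) ` {S. S \<subseteq> X - {x} \<and> S \<noteq> {}}))"

end

theory Submission
  imports Defs
begin

definition Dif :: "('a set \<Rightarrow> 'b::comm_ring_1) \<Rightarrow> 'a set \<Rightarrow> 'a set \<Rightarrow> 'b" where
  "Dif F L A = (\<Sum>M\<in>Pow L. (-1) ^ card (L - M) * F (A \<union> M))"

definition pf :: "('a set \<Rightarrow> 'b::comm_monoid_mult) \<Rightarrow> 'a set \<Rightarrow> 'b" where
  "pf w M = (\<Prod>C\<in>Pow M. w C)"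

lemma Dif_empty[simp]: "Dif F {} A = F A"
  by (simp add: Dif_def)

lemma Dif_insert:
  assumes "finite L" "a \<notin> L"
  shows "Dif F (insert a L) A = Dif F L (insert a A) - Dif F L A"
proof -
  have inj: "inj_on (insert a) (Pow L)" using assms(2)
    by (smt (verit, ccfv_SIG) PowD inj_onI insert_ident subset_iff)
  have disj: "Pow L \<inter> insert a ` Pow L = {}" using assms(2) by auto
  have "Dif F (insert a L) A = (\<Sum>M\<in>Pow L. (-1) ^ card (insert a L - M) * F (A \<union> M))
       + (\<Sum>M\<in>insert a ` Pow L. (-1) ^ card (insert a L - M) * F (A \<union> M))"
    unfolding Dif_def Pow_insert using assms(1) disj by (simp add: sum.union_disjoint)
  also have "(\<Sum>M\<in>insert a ` Pow L. (-1) ^ card (insert a L - M) * F (A \<union> M))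
      = (\<Sum>M\<in>Pow L. (-1) ^ card (L - M) * F (insert a A \<union> M))"
    using inj assms(2) by (subst sum.reindex) (auto intro!: sum.cong simp: insert_Diff_if)
  also have "(\<Sum>M\<in>Pow L. (-1) ^ card (insert a L - M) * F (A \<union> M))
      = - (\<Sum>M\<in>Pow L. (-1) ^ card (L - M) * F (A \<union> M))"
  proof -
    have "(\<Sum>M\<in>Pow L. (-1) ^ card (insert a L - M) * F (A \<union> M))
        = (\<Sum>M\<in>Pow L. - ((-1) ^ card (L - M) * F (A \<union> M)))"
    proof (rule sum.cong)
      fix M assume "M \<in> Pow L"
      then have "insert a L - M = insert a (L - M)" "a \<notin> L - M" "finite (L - M)"
        using assms by auto
      then show "(-1) ^ card (insert a L - M) * F (A \<union> M) = - ((-1) ^ card (L - M) * F (A \<union> M))"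
        by simp
    qed simp
    then show ?thesis by (simp add: sum_negf)
  qed
  finally show ?thesis unfolding Dif_def by simp
qed

lemma Dif_cong:
  assumes "\<And>M. M \<subseteq> L \<Longrightarrow> F (A \<union> M) = G (A \<union> M)"
  shows "Dif F L A = Dif G L A"
  unfolding Dif_def using assms by (auto intro!: sum.cong)

lemma Dif_diff: "Dif (\<lambda>M. F M - G M) L A = Dif F L A - Dif G L A"
  unfolding Dif_def by (simp add: algebra_simps sum_subtractf)

lemma Dif_diff_const:
  assumes "finite L"
  shows "Dif (\<lambda>M. F M - c) L A = Dif F L A - (if L = {} then c else 0)"
  using assms
proof (induction L arbitrary: A rule: finite_induct)
  case empty then show ?case by simp
next
  case (insert a L)
  show ?case using insert by (simp add: Dif_insert)
qed

lemma Dif_scale: "Dif (\<lambda>M. c * F M) L A = c * Dif F L A"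
  unfolding Dif_def by (simp add: sum_distrib_left algebra_simps)

lemma Leibniz:
  assumes "finite L"
  shows "Dif (\<lambda>M. f M * g M) L A = (\<Sum>K\<in>Pow L. Dif f K A * Dif g (L - K) (A \<union> K))"
  using assms
proof (induction L arbitrary: A rule: finite_induct)
  case empty then show ?case by simp
next
  case (insert a L)
  have inj: "inj_on (insert a) (Pow L)" using insert(2)
    by (smt (verit, ccfv_SIG) PowD inj_onI insert_ident subset_iff)
  have disj: "Pow L \<inter> insert a ` Pow L = {}" using insert(2) by auto
  have fin: "finite (Pow L)" using insert by simp
  have "(\<Sum>K\<in>Pow (insert a L). Dif f K A * Dif g (insert a L - K) (A \<union> K))
     = (\<Sum>K\<in>Pow L. Dif f K A * Dif g (insert a L - K) (A \<union> K))
     + (\<Sum>K\<in>insert a ` Pow L. Dif f K A * Dif g (insert a L - K) (A \<union> K))"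
    unfolding Pow_insert using fin disj by (simp add: sum.union_disjoint)
  also have "(\<Sum>K\<in>insert a ` Pow L. Dif f K A * Dif g (insert a L - K) (A \<union> K))
     = (\<Sum>K\<in>Pow L. Dif f (insert a K) A * Dif g (insert a L - insert a K) (A \<union> insert a K))"
    using inj by (simp add: sum.reindex)
  also have "(\<Sum>K\<in>Pow L. Dif f (insert a K) A * Dif g (insert a L - insert a K) (A \<union> insert a K))
     = (\<Sum>K\<in>Pow L. (Dif f K (insert a A) - Dif f K A) * Dif g (L - K) (insert a A \<union> K))"
  proof (rule sum.cong)
    fix K assume K: "K \<in> Pow L"
    then have "finite K" "a \<notin> K" using insert finite_subset by auto
    moreover have "insert a L - insert a K = L - K" using insert(2) K by auto
    ultimately show "Dif f (insert a K) A * Dif g (insert a L - insert a K) (A \<union> insert a K)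
       = (Dif f K (insert a A) - Dif f K A) * Dif g (L - K) (insert a A \<union> K)"
      by (simp add: Dif_insert)
  qed simp
  also have "(\<Sum>K\<in>Pow L. Dif f K A * Dif g (insert a L - K) (A \<union> K))
     = (\<Sum>K\<in>Pow L. Dif f K A * (Dif g (L - K) (insert a A \<union> K) - Dif g (L - K) (A \<union> K)))"
  proof (rule sum.cong)
    fix K assume K: "K \<in> Pow L"
    then have "insert a L - K = insert a (L - K)" "a \<notin> L - K" "finite (L - K)"
      using insert by auto
    then show "Dif f K A * Dif g (insert a L - K) (A \<union> K)
       = Dif f K A * (Dif g (L - K) (insert a A \<union> K) - Dif g (L - K) (A \<union> K))"
      by (simp add: Dif_insert)
  qed simp
  finally have R: "(\<Sum>K\<in>Pow (insert a L). Dif f K A * Dif g (insert a L - K) (A \<union> K))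
     = (\<Sum>K\<in>Pow L. Dif f K (insert a A) * Dif g (L - K) (insert a A \<union> K))
       - (\<Sum>K\<in>Pow L. Dif f K A * Dif g (L - K) (A \<union> K))"
    by (simp add: algebra_simps sum.distrib sum_subtractf)
  show ?case unfolding R using insert by (simp add: Dif_insert)
qed

lemma pf_insert:
  assumes "finite X" "a \<notin> X"
  shows "pf w (insert a X) = pf w X * pf (\<lambda>D. w (insert a D)) X"
proof -
  have inj: "inj_on (insert a) (Pow X)" using assms(2)
    by (smt (verit, ccfv_SIG) PowD inj_onI insert_ident subset_iff)
  have disj: "Pow X \<inter> insert a ` Pow X = {}" using assms(2) by auto
  show ?thesis unfolding pf_def Pow_insert using assms(1) disj inj
    by (simp add: prod.union_disjoint prod.reindex)
qed

definition H0 :: "('a \<Rightarrow> real) \<Rightarrow> 'a set \<Rightarrow> ('a set \<Rightarrow> complex) \<Rightarrow> ('a set \<Rightarrow> real) \<Rightarrow> bool" where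
  "H0 al U w p \<longleftrightarrow> (\<forall>C\<subseteq>U. 0 \<le> p C \<and> cmod (w C) \<le> 1 + p C \<and>
      (\<forall>S\<subseteq>C. S \<noteq> {} \<longrightarrow> cmod (w C - 1) * (\<Prod>s\<in>S. al s) \<le> p C))"

definition Hc :: "('a \<Rightarrow> real) \<Rightarrow> 'a set \<Rightarrow> ('a set \<Rightarrow> complex) \<Rightarrow> ('a set \<Rightarrow> real) \<Rightarrow> real \<Rightarrow> bool" where
  "Hc al U w p c \<longleftrightarrow> H0 al U w p \<and> (\<forall>C\<subseteq>U. \<forall>S\<subseteq>C. c * cmod (w C - 1) * (\<Prod>s\<in>S. al s) \<le> p C)"

lemma H0_mono: "H0 al U w p \<Longrightarrow> V \<subseteq> U \<Longrightarrow> H0 al V w p"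
  unfolding H0_def by (meson subset_trans)

lemma Hc_mono: "Hc al U w p c \<Longrightarrow> V \<subseteq> U \<Longrightarrow> Hc al V w p c"
  unfolding Hc_def using H0_mono by (meson subset_trans)

lemma H0_shift:
  assumes "H0 al (insert a U) w p" "a \<notin> U" "finite U"
  shows "Hc al U (\<lambda>D. w (insert a D)) (\<lambda>D. p (insert a D)) (al a)"
  unfolding Hc_def H0_def
proof (intro conjI allI impI)
  fix C assume C: "C \<subseteq> U"
  then have C': "insert a C \<subseteq> insert a U" by auto
  show "0 \<le> p (insert a C)" "cmod (w (insert a C)) \<le> 1 + p (insert a C)"
    using assms(1) C' unfolding H0_def by auto
  {
    fix S assume "S \<subseteq> C" "S \<noteq> {}"
    then show "cmod (w (insert a C) - 1) * (\<Prod>s\<in>S. al s) \<le> p (insert a C)"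
      using assms(1) C' unfolding H0_def by (meson subset_insertI2)
  }
  {
    fix S assume S: "S \<subseteq> C"
    then have "a \<notin> S" "finite S" using S C assms(2,3) by (auto intro: finite_subset[of S U])
    then have "(\<Prod>s\<in>insert a S. al s) = al a * (\<Prod>s\<in>S. al s)" by simp
    moreover have "cmod (w (insert a C) - 1) * (\<Prod>s\<in>insert a S. al s) \<le> p (insert a C)"
      using assms(1) C' S unfolding H0_def by (meson insert_mono insert_not_empty)
    ultimately show "al a * cmod (w (insert a C) - 1) * (\<Prod>s\<in>S. al s) \<le> p (insert a C)"
      by (simp add: algebra_simps)
  }
qed

lemma Hc_shift:
  assumes "Hc al (insert a U) w p c" "a \<notin> U" "finite U"
  shows "Hc al U (\<lambda>D. w (insert a D)) (\<lambda>D. p (insert a D)) (c * al a)"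
proof -
  have h0: "H0 al U (\<lambda>D. w (insert a D)) (\<lambda>D. p (insert a D))"
    using H0_shift[of al a U w p] assms unfolding Hc_def by auto
  show ?thesis unfolding Hc_def
  proof (intro conjI allI impI h0)
    fix C S assume C: "C \<subseteq> U" and S: "S \<subseteq> C"
    then have "a \<notin> S" "finite S" using S C assms(2,3) by (auto intro: finite_subset[of S U])
    then have "(\<Prod>s\<in>insert a S. al s) = al a * (\<Prod>s\<in>S. al s)" by simp
    moreover have "c * cmod (w (insert a C) - 1) * (\<Prod>s\<in>insert a S. al s) \<le> p (insert a C)"
      using assms(1) C S unfolding Hc_def by (meson insert_mono)
    ultimately show "c * al a * cmod (w (insert a C) - 1) * (\<Prod>s\<in>S. al s) \<le> p (insert a C)"
      by (simp add: algebra_simps)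
  qed
qed

lemma tele:
  fixes w :: "'i \<Rightarrow> complex"
  assumes "finite I" "0 \<le> c"
    and "\<And>i. i \<in> I \<Longrightarrow> 0 \<le> p i \<and> cmod (w i) \<le> 1 + p i \<and> c * cmod (w i - 1) \<le> p i"
  shows "c * cmod ((\<Prod>i\<in>I. w i) - 1) \<le> (\<Prod>i\<in>I. 1 + p i) - 1"
  using assms(1,3)
proof (induction I rule: finite_induct)
  case empty then show ?case by simp
next
  case (insert j I)
  have ih: "c * cmod ((\<Prod>i\<in>I. w i) - 1) \<le> (\<Prod>i\<in>I. 1 + p i) - 1"
    using insert by auto
  have hj: "0 \<le> p j" "cmod (w j) \<le> 1 + p j" "c * cmod (w j - 1) \<le> p j" using insert by auto
  have eq: "(\<Prod>i\<in>insert j I. w i) - 1 = w j * ((\<Prod>i\<in>I. w i) - 1) + (w j - 1)"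
    using insert by (simp add: algebra_simps)
  have tri: "cmod ((\<Prod>i\<in>insert j I. w i) - 1) \<le> cmod (w j) * cmod ((\<Prod>i\<in>I. w i) - 1) + cmod (w j - 1)"
    unfolding eq by (metis norm_mult norm_triangle_ineq)
  have "c * cmod ((\<Prod>i\<in>insert j I. w i) - 1) \<le> c * (cmod (w j) * cmod ((\<Prod>i\<in>I. w i) - 1) + cmod (w j - 1))"
    using tri assms(2) by (rule mult_left_mono)
  also have "\<dots> = cmod (w j) * (c * cmod ((\<Prod>i\<in>I. w i) - 1)) + c * cmod (w j - 1)"
    by (simp add: algebra_simps)
  also have "\<dots> \<le> (1 + p j) * ((\<Prod>i\<in>I. 1 + p i) - 1) + p j"
  proof (rule add_mono)
    show "cmod (w j) * (c * cmod ((\<Prod>i\<in>I. w i) - 1)) \<le> (1 + p j) * ((\<Prod>i\<in>I. 1 + p i) - 1)"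
      by (rule mult_mono) (use hj ih assms(2) in auto)
    show "c * cmod (w j - 1) \<le> p j" by (rule hj(3))
  qed
  also have "\<dots> = (\<Prod>i\<in>insert j I. 1 + p i) - 1" using insert by (simp add: algebra_simps)
  finally show ?case .
qed

lemma decomp:
  fixes w :: "'a set \<Rightarrow> 'b::comm_ring_1"
  assumes "finite L" "finite A" "a \<notin> A" "a \<notin> L"
  shows "Dif (pf w) (insert a L) A =
    (\<Sum>K\<in>Pow L. Dif (pf w) K A * Dif (\<lambda>M. pf (\<lambda>D. w (insert a D)) M - 1) (L - K) (A \<union> K))"
proof -
  have 1: "Dif (pf w) L (insert a A) = Dif (\<lambda>M. pf w M * pf (\<lambda>D. w (insert a D)) M) L A"
    unfolding Dif_def
  proof (rule sum.cong)
    fix M assume "M \<in> Pow L"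
    then have "finite (A \<union> M)" "a \<notin> A \<union> M" using assms finite_subset by auto
    then show "(- 1) ^ card (L - M) * pf w (insert a A \<union> M) =
         (- 1) ^ card (L - M) * (pf w (A \<union> M) * pf (\<lambda>D. w (insert a D)) (A \<union> M))"
      by (simp add: pf_insert)
  qed simp
  have "Dif (pf w) (insert a L) A = Dif (\<lambda>M. pf w M * pf (\<lambda>D. w (insert a D)) M) L A - Dif (pf w) L A"
    using assms by (simp add: Dif_insert 1)
  also have "\<dots> = Dif (\<lambda>M. pf w M * (pf (\<lambda>D. w (insert a D)) M - 1)) L A"
    by (simp add: Dif_diff[symmetric] algebra_simps)
  also have "\<dots> = (\<Sum>K\<in>Pow L. Dif (pf w) K A * Dif (\<lambda>M. pf (\<lambda>D. w (insert a D)) M - 1) (L - K) (A \<union> K))"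
    using assms(1) by (rule Leibniz)
  finally show ?thesis .
qed

lemma sum_bound:
  fixes x y :: "'i \<Rightarrow> complex"
  assumes "finite I" "0 \<le> t"
    and "\<And>K. K \<in> I \<Longrightarrow> cmod (x K) * u K \<le> X K \<and> cmod (y K) * v K \<le> Y K \<and> 0 \<le> u K \<and> 0 \<le> v K \<and> t = u K * v K"
  shows "cmod (\<Sum>K\<in>I. x K * y K) * t \<le> (\<Sum>K\<in>I. X K * Y K)"
proof -
  have "cmod (\<Sum>K\<in>I. x K * y K) * t \<le> (\<Sum>K\<in>I. cmod (x K * y K)) * t"
    using assms(2) by (intro mult_right_mono norm_sum) auto
  also have "\<dots> = (\<Sum>K\<in>I. cmod (x K * y K) * t)" by (simp add: sum_distrib_right)
  also have "\<dots> = (\<Sum>K\<in>I. (cmod (x K) * u K) * (cmod (y K) * v K))"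
  proof (rule sum.cong)
    fix K assume "K \<in> I"
    then have "t = u K * v K" using assms(3) by blast
    then show "cmod (x K * y K) * t = (cmod (x K) * u K) * (cmod (y K) * v K)"
      by (simp add: norm_mult algebra_simps)
  qed simp
  also have "\<dots> \<le> (\<Sum>K\<in>I. X K * Y K)"
    using assms(3) by (intro sum_mono mult_mono) (auto intro: order_trans[OF _ conjunct1[OF assms(3)]])
  finally show ?thesis .
qed

lemma claim:
  assumes al: "\<And>s. 0 \<le> al s" and "finite L"
  shows "\<forall>A. finite A \<longrightarrow> A \<inter> L = {} \<longrightarrow>
   (\<forall>w p. H0 al (A \<union> L) w p \<longrightarrow> cmod (Dif (pf w) L A) * (\<Prod>s\<in>L. al s) \<le> Dif (pf (\<lambda>C. 1 + p C)) L A) \<and>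
   (\<forall>w p c. 0 \<le> c \<longrightarrow> Hc al (A \<union> L) w p c \<longrightarrow>
      cmod (Dif (\<lambda>M. pf w M - 1) L A) * (\<Prod>s\<in>L. al s) * c \<le> Dif (\<lambda>M. pf (\<lambda>C. 1 + p C) M - 1) L A)"
  using assms(2)
proof (induction L rule: finite_psubset_induct)
  case (psubset L)
  show ?case
  proof (intro allI impI, rule conjI)
    fix A :: "'a set" assume A: "finite A" "A \<inter> L = {}"
    show "\<forall>w p. H0 al (A \<union> L) w p \<longrightarrow> cmod (Dif (pf w) L A) * (\<Prod>s\<in>L. al s) \<le> Dif (pf (\<lambda>C. 1 + p C)) L A"
    proof (intro allI impI)
      fix w p assume h: "H0 al (A \<union> L) w p"
      show "cmod (Dif (pf w) L A) * (\<Prod>s\<in>L. al s) \<le> Dif (pf (\<lambda>C. 1 + p C)) L A"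
      proof (cases "L = {}")
        case True
        have "cmod (pf w A) \<le> pf (\<lambda>C. 1 + p C) A"
          unfolding pf_def prod_norm[symmetric]
          using h True by (intro prod_mono) (auto simp: H0_def)
        then show ?thesis using True by simp
      next
        case False
        then obtain a where a: "a \<in> L" by auto
        define L0 where "L0 = L - {a}"
        have L: "L = insert a L0" "a \<notin> L0" "finite L0" "a \<notin> A" using a A psubset(1) L0_def by auto
        have dw: "Dif (pf w) (insert a L0) A = (\<Sum>K\<in>Pow L0. Dif (pf w) K A * Dif (\<lambda>M. pf (\<lambda>D. w (insert a D)) M - 1) (L0 - K) (A \<union> K))"
          by (rule decomp) (use L A in auto)
        have dp: "Dif (pf (\<lambda>C. 1 + p C)) (insert a L0) A = (\<Sum>K\<in>Pow L0. Dif (pf (\<lambda>C. 1 + p C)) K A * Dif (\<lambda>M. pf (\<lambda>D. 1 + p (insert a D)) M - 1) (L0 - K) (A \<union> K))"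
          by (rule decomp) (use L A in auto)
        show ?thesis
          unfolding L(1) dw dp
        proof -
          have "cmod (\<Sum>K\<in>Pow L0. Dif (pf w) K A * Dif (\<lambda>M. pf (\<lambda>D. w (insert a D)) M - 1) (L0 - K) (A \<union> K))
             * (\<Prod>s\<in>insert a L0. al s)
            \<le> (\<Sum>K\<in>Pow L0. Dif (pf (\<lambda>C. 1 + p C)) K A * Dif (\<lambda>M. pf (\<lambda>D. 1 + p (insert a D)) M - 1) (L0 - K) (A \<union> K))"
          proof (rule sum_bound[where u = "\<lambda>K. \<Prod>s\<in>K. al s" and v = "\<lambda>K. (\<Prod>s\<in>L0 - K. al s) * al a"])
            show "finite (Pow L0)" using L by simp
            show "0 \<le> (\<Prod>s\<in>insert a L0. al s)" using al by (simp add: prod_nonneg)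
            fix K assume K: "K \<in> Pow L0"
            have KL: "K \<subset> L" "L0 - K \<subset> L" using K L by auto
            have fK: "finite K" using K L finite_subset by auto
            have ihA: "cmod (Dif (pf w) K A) * (\<Prod>s\<in>K. al s) \<le> Dif (pf (\<lambda>C. 1 + p C)) K A"
            proof -
              have dK: "A \<inter> K = {}" using A K L by auto
              have hK: "H0 al (A \<union> K) w p" by (rule H0_mono[OF h]) (use K L in auto)
              show ?thesis
                by (rule psubset(2)[OF KL(1), THEN spec[of _ A], THEN mp[OF _ A(1)], THEN mp[OF _ dK],
                   THEN conjunct1, THEN spec[of _ w], THEN spec[of _ p], THEN mp[OF _ hK]])
            qed
            have hs: "Hc al (A \<union> L0) (\<lambda>D. w (insert a D)) (\<lambda>D. p (insert a D)) (al a)"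
              using H0_shift[of al a "A \<union> L0" w p] h L A unfolding L(1) by auto
            have eqU: "A \<union> K \<union> (L0 - K) = A \<union> L0" using K by auto
            have ihB: "cmod (Dif (\<lambda>M. pf (\<lambda>D. w (insert a D)) M - 1) (L0 - K) (A \<union> K)) * (\<Prod>s\<in>L0 - K. al s) * al a
                \<le> Dif (\<lambda>M. pf (\<lambda>D. 1 + p (insert a D)) M - 1) (L0 - K) (A \<union> K)"
            proof -
              have dK: "(A \<union> K) \<inter> (L0 - K) = {}" using A K L by auto
              have fAK: "finite (A \<union> K)" using A fK by auto
              have hs': "Hc al (A \<union> K \<union> (L0 - K)) (\<lambda>D. w (insert a D)) (\<lambda>D. p (insert a D)) (al a)"
                using hs eqU by simp
              have cc: "0 \<le> al a" using al  by simp
              show ?thesis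
                by (rule psubset(2)[OF KL(2), THEN spec[of _ "A \<union> K"], THEN mp[OF _ fAK], THEN mp[OF _ dK],
                   THEN conjunct2, THEN spec[of _ "\<lambda>D. w (insert a D)"], THEN spec[of _ "\<lambda>D. p (insert a D)"],
                   THEN spec[of _ "al a"], THEN mp[OF _ cc], THEN mp[OF _ hs']])
            qed
            have "(\<Prod>s\<in>L0. al s) = (\<Prod>s\<in>L0 - K. al s) * (\<Prod>s\<in>K. al s)"
              using L K by (intro prod.subset_diff) auto
            then have e: "(\<Prod>s\<in>insert a L0. al s) = (\<Prod>s\<in>K. al s) * ((\<Prod>s\<in>L0 - K. al s) * al a)"
              using L by (simp add: mult_ac)
            have n1: "0 \<le> (\<Prod>s\<in>K. al s)" "0 \<le> (\<Prod>s\<in>L0 - K. al s)" using al by (auto intro: prod_nonneg)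
            show "cmod (Dif (pf w) K A) * (\<Prod>s\<in>K. al s) \<le> Dif (pf (\<lambda>C. 1 + p C)) K A \<and>
               cmod (Dif (\<lambda>M. pf (\<lambda>D. w (insert a D)) M - 1) (L0 - K) (A \<union> K)) * ((\<Prod>s\<in>L0 - K. al s) * al a)
                \<le> Dif (\<lambda>M. pf (\<lambda>D. 1 + p (insert a D)) M - 1) (L0 - K) (A \<union> K) \<and>
               0 \<le> (\<Prod>s\<in>K. al s) \<and> 0 \<le> (\<Prod>s\<in>L0 - K. al s) * al a \<and>
               (\<Prod>s\<in>insert a L0. al s) = (\<Prod>s\<in>K. al s) * ((\<Prod>s\<in>L0 - K. al s) * al a)"
              apply (intro conjI)
              subgoal using ihA by simp
              subgoal using ihB by (simp add: mult.assoc)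
              subgoal using n1 by simp
              subgoal using n1 al by simp
              subgoal using e by simp
              done
          qed
          then show "cmod (\<Sum>K\<in>Pow L0. Dif (pf w) K A * Dif (\<lambda>M. pf (\<lambda>D. w (insert a D)) M - 1) (L0 - K) (A \<union> K))
             * (\<Prod>s\<in>insert a L0. al s)
            \<le> (\<Sum>K\<in>Pow L0. Dif (pf (\<lambda>C. 1 + p C)) K A * Dif (\<lambda>M. pf (\<lambda>D. 1 + p (insert a D)) M - 1) (L0 - K) (A \<union> K))" .
        qed
      qed
    qed
  next
    fix A :: "'a set" assume A: "finite A" "A \<inter> L = {}"
    show "\<forall>w p c. 0 \<le> c \<longrightarrow> Hc al (A \<union> L) w p c \<longrightarrow>
      cmod (Dif (\<lambda>M. pf w M - 1) L A) * (\<Prod>s\<in>L. al s) * c \<le> Dif (\<lambda>M. pf (\<lambda>C. 1 + p C) M - 1) L A"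
    proof (intro allI impI)
      fix w p c assume c: "0 \<le> c" and h: "Hc al (A \<union> L) w p c"
      show "cmod (Dif (\<lambda>M. pf w M - 1) L A) * (\<Prod>s\<in>L. al s) * c \<le> Dif (\<lambda>M. pf (\<lambda>C. 1 + p C) M - 1) L A"
      proof (cases "L = {}")
        case True
        have "c * cmod (pf w A - 1) \<le> pf (\<lambda>C. 1 + p C) A - 1"
          unfolding pf_def
        proof (rule tele)
          show "finite (Pow A)" using A by simp
          show "0 \<le> c" by fact
          fix C assume "C \<in> Pow A"
          then show "0 \<le> p C \<and> cmod (w C) \<le> 1 + p C \<and> c * cmod (w C - 1) \<le> p C"
            using h True unfolding Hc_def H0_def
            by (metis Pow_iff empty_subsetI mult.right_neutral prod.empty sup_bot.right_neutral)
        qed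
        then show ?thesis using True by (simp add: algebra_simps)
      next
        case False
        then obtain a where a: "a \<in> L" by auto
        define L0 where "L0 = L - {a}"
        have L: "L = insert a L0" "a \<notin> L0" "finite L0" "a \<notin> A" using a A psubset(1) L0_def by auto
        have h0: "H0 al (A \<union> L) w p" using h unfolding Hc_def by auto
        have dw: "Dif (pf w) (insert a L0) A = (\<Sum>K\<in>Pow L0. Dif (pf w) K A * Dif (\<lambda>M. pf (\<lambda>D. w (insert a D)) M - 1) (L0 - K) (A \<union> K))"
          by (rule decomp) (use L A in auto)
        have dp: "Dif (pf (\<lambda>C. 1 + p C)) (insert a L0) A = (\<Sum>K\<in>Pow L0. Dif (pf (\<lambda>C. 1 + p C)) K A * Dif (\<lambda>M. pf (\<lambda>D. 1 + p (insert a D)) M - 1) (L0 - K) (A \<union> K))"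
          by (rule decomp) (use L A in auto)
        show ?thesis
          unfolding L(1) using L(3) apply (simp only: Dif_diff_const finite_insert insert_not_empty if_False diff_zero)
          unfolding dw dp
        proof -
          have "cmod (\<Sum>K\<in>Pow L0. Dif (pf w) K A * Dif (\<lambda>M. pf (\<lambda>D. w (insert a D)) M - 1) (L0 - K) (A \<union> K))
             * ((\<Prod>s\<in>insert a L0. al s) * c)
            \<le> (\<Sum>K\<in>Pow L0. Dif (pf (\<lambda>C. 1 + p C)) K A * Dif (\<lambda>M. pf (\<lambda>D. 1 + p (insert a D)) M - 1) (L0 - K) (A \<union> K))"
          proof (rule sum_bound[where u = "\<lambda>K. \<Prod>s\<in>K. al s" and v = "\<lambda>K. (\<Prod>s\<in>L0 - K. al s) * (c * al a)"])
            show "finite (Pow L0)" using L by simp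
            show "0 \<le> (\<Prod>s\<in>insert a L0. al s) * c" using al c by (simp add: prod_nonneg)
            fix K assume K: "K \<in> Pow L0"
            have KL: "K \<subset> L" "L0 - K \<subset> L" using K L by auto
            have fK: "finite K" using K L finite_subset by auto
            have ihA: "cmod (Dif (pf w) K A) * (\<Prod>s\<in>K. al s) \<le> Dif (pf (\<lambda>C. 1 + p C)) K A"
            proof -
              have dK: "A \<inter> K = {}" using A K L by auto
              have hK: "H0 al (A \<union> K) w p" by (rule H0_mono[OF h0]) (use K L in auto)
              show ?thesis
                by (rule psubset(2)[OF KL(1), THEN spec[of _ A], THEN mp[OF _ A(1)], THEN mp[OF _ dK],
                   THEN conjunct1, THEN spec[of _ w], THEN spec[of _ p], THEN mp[OF _ hK]])
            qed
            have hs: "Hc al (A \<union> L0) (\<lambda>D. w (insert a D)) (\<lambda>D. p (insert a D)) (c * al a)"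
              using Hc_shift[of al a "A \<union> L0" w p c] h L A unfolding L(1) by auto
            have eqU: "A \<union> K \<union> (L0 - K) = A \<union> L0" using K by auto
            have ihB: "cmod (Dif (\<lambda>M. pf (\<lambda>D. w (insert a D)) M - 1) (L0 - K) (A \<union> K)) * (\<Prod>s\<in>L0 - K. al s) * (c * al a)
                \<le> Dif (\<lambda>M. pf (\<lambda>D. 1 + p (insert a D)) M - 1) (L0 - K) (A \<union> K)"
            proof -
              have dK: "(A \<union> K) \<inter> (L0 - K) = {}" using A K L by auto
              have fAK: "finite (A \<union> K)" using A fK by auto
              have hs': "Hc al (A \<union> K \<union> (L0 - K)) (\<lambda>D. w (insert a D)) (\<lambda>D. p (insert a D)) (c * al a)"
                using hs eqU by simp
              have cc: "0 \<le> c * al a" using al c by simp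
              show ?thesis
                by (rule psubset(2)[OF KL(2), THEN spec[of _ "A \<union> K"], THEN mp[OF _ fAK], THEN mp[OF _ dK],
                   THEN conjunct2, THEN spec[of _ "\<lambda>D. w (insert a D)"], THEN spec[of _ "\<lambda>D. p (insert a D)"],
                   THEN spec[of _ "c * al a"], THEN mp[OF _ cc], THEN mp[OF _ hs']])
            qed
            have "(\<Prod>s\<in>L0. al s) = (\<Prod>s\<in>L0 - K. al s) * (\<Prod>s\<in>K. al s)"
              using L K by (intro prod.subset_diff) auto
            then have e: "(\<Prod>s\<in>insert a L0. al s) = (\<Prod>s\<in>K. al s) * ((\<Prod>s\<in>L0 - K. al s) * al a)"
              using L by (simp add: mult_ac)
            have n1: "0 \<le> (\<Prod>s\<in>K. al s)" "0 \<le> (\<Prod>s\<in>L0 - K. al s)" using al by (auto intro: prod_nonneg)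
            show "cmod (Dif (pf w) K A) * (\<Prod>s\<in>K. al s) \<le> Dif (pf (\<lambda>C. 1 + p C)) K A \<and>
               cmod (Dif (\<lambda>M. pf (\<lambda>D. w (insert a D)) M - 1) (L0 - K) (A \<union> K)) * ((\<Prod>s\<in>L0 - K. al s) * (c * al a))
                \<le> Dif (\<lambda>M. pf (\<lambda>D. 1 + p (insert a D)) M - 1) (L0 - K) (A \<union> K) \<and>
               0 \<le> (\<Prod>s\<in>K. al s) \<and> 0 \<le> (\<Prod>s\<in>L0 - K. al s) * (c * al a) \<and>
               (\<Prod>s\<in>insert a L0. al s) * c = (\<Prod>s\<in>K. al s) * ((\<Prod>s\<in>L0 - K. al s) * (c * al a))"
              apply (intro conjI)
              subgoal using ihA by simp
              subgoal using ihB by (simp add: mult.assoc)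
              subgoal using n1 by simp
              subgoal using n1 al c by simp
              subgoal using e by (simp add: mult_ac)
              done
          qed
          then show "cmod (\<Sum>K\<in>Pow L0. Dif (pf w) K A * Dif (\<lambda>M. pf (\<lambda>D. w (insert a D)) M - 1) (L0 - K) (A \<union> K))
             * (\<Prod>s\<in>insert a L0. al s) * c
            \<le> (\<Sum>K\<in>Pow L0. Dif (pf (\<lambda>C. 1 + p C)) K A * Dif (\<lambda>M. pf (\<lambda>D. 1 + p (insert a D)) M - 1) (L0 - K) (A \<union> K))"
            by (simp add: mult.assoc)
        qed
      qed
    qed
  qed
qed

lemma inversion:
  assumes "finite L"
  shows "finite A \<Longrightarrow> A \<inter> L = {} \<Longrightarrow>
    Dif (\<lambda>M. \<Sum>CC\<in>Pow (Pow M). phi CC) L A = (\<Sum>CC\<in>{CC. CC \<subseteq> Pow (A \<union> L) \<and> L \<subseteq> \<Union>CC}. phi CC)"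
  using assms
proof (induction L arbitrary: A rule: finite_induct)
  case empty
  have "{CC. CC \<subseteq> Pow (A \<union> {}) \<and> {} \<subseteq> \<Union>CC} = Pow (Pow A)" by auto
  then show ?case by simp
next
  case (insert a L)
  have aA: "a \<notin> A" using insert by auto
  have ih1: "Dif (\<lambda>M. \<Sum>CC\<in>Pow (Pow M). phi CC) L (insert a A)
     = (\<Sum>CC\<in>{CC. CC \<subseteq> Pow (insert a A \<union> L) \<and> L \<subseteq> \<Union>CC}. phi CC)"
    using insert by auto
  have ih2: "Dif (\<lambda>M. \<Sum>CC\<in>Pow (Pow M). phi CC) L A
     = (\<Sum>CC\<in>{CC. CC \<subseteq> Pow (A \<union> L) \<and> L \<subseteq> \<Union>CC}. phi CC)"
    using insert by auto
  define S1 where "S1 = {CC. CC \<subseteq> Pow (insert a A \<union> L) \<and> L \<subseteq> \<Union>CC}"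
  define T where "T = {CC. CC \<subseteq> Pow (A \<union> insert a L) \<and> insert a L \<subseteq> \<Union>CC}"
  define S0 where "S0 = {CC. CC \<subseteq> Pow (A \<union> L) \<and> L \<subseteq> \<Union>CC}"
  have fin: "finite S1" unfolding S1_def
    by (rule finite_subset[of _ "Pow (Pow (insert a A \<union> L))"]) (use insert in auto)
  have U: "S1 = T \<union> S0"
  proof
    show "S1 \<subseteq> T \<union> S0"
    proof
      fix CC assume "CC \<in> S1"
      then have c: "CC \<subseteq> Pow (insert a A \<union> L)" "L \<subseteq> \<Union>CC" unfolding S1_def by auto
      show "CC \<in> T \<union> S0"
      proof (cases "a \<in> \<Union>CC")
        case True then show ?thesis using c unfolding T_def by auto
      next
        case False
        have "CC \<subseteq> Pow (A \<union> L)"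
        proof
          fix C assume "C \<in> CC"
          then show "C \<in> Pow (A \<union> L)" using c False by blast
        qed
        then show ?thesis using c unfolding S0_def by auto
      qed
    qed
    show "T \<union> S0 \<subseteq> S1" unfolding S1_def T_def S0_def by auto
  qed
  have disj: "T \<inter> S0 = {}" unfolding T_def S0_def using aA insert(2) by auto
  have "sum phi S1 = sum phi T + sum phi S0"
    unfolding U by (rule sum.union_disjoint) (use fin U disj in auto)
  moreover have "Dif (\<lambda>M. \<Sum>CC\<in>Pow (Pow M). phi CC) (insert a L) A = sum phi S1 - sum phi S0"
    using insert ih1 ih2 unfolding S1_def S0_def by (simp add: Dif_insert)
  ultimately show ?case unfolding T_def by simp
qed

lemma alpha_nonneg: "0 \<le> r s \<and> r s < 1 \<Longrightarrow> 0 \<le> alpha r s"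
  unfolding alpha_def by simp

lemma kappa_pt_eq:
  assumes "x \<notin> M" "finite M"
  shows "kappa_pt W x M = W {x} * pf (\<lambda>C. if C = {} then 1 else W (insert x C)) M"
proof -
  have ss: "{S. S \<subseteq> {x} \<and> S \<noteq> {}} = {{x}}" by auto
  have "kappa_pt W x M = (\<Prod>C\<in>Pow M. W ({x} \<union> C))"
    unfolding kappa_pt_def kappa_def ss Wcond_def using assms(1) by simp
  also have "\<dots> = W ({x} \<union> {}) * (\<Prod>C\<in>Pow M - {{}}. W ({x} \<union> C))"
    using assms(2) by (intro prod.remove) auto
  also have "(\<Prod>C\<in>Pow M - {{}}. W ({x} \<union> C)) = (\<Prod>C\<in>Pow M - {{}}. (if C = {} then 1 else W (insert x C)))"
    by (intro prod.cong) auto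
  also have "\<dots> = pf (\<lambda>C. if C = {} then 1 else W (insert x C)) M"
    unfolding pf_def using assms(2) by (subst (2) prod.remove[of _ "{}"]) auto
  finally show ?thesis by simp
qed

lemma reindex_families:
  assumes "x \<notin> N" "finite N"
  shows "(\<Sum>XX\<in>{XX. XX \<subseteq> Fx x \<and> \<Union>XX - {x} = N}. \<Prod>X\<in>XX. g X)
       = (\<Sum>CC\<in>{CC. CC \<subseteq> Pow N \<and> \<Union>CC = N}. \<Prod>C\<in>CC. g (insert x C))"
proof -
  let ?A = "{CC. CC \<subseteq> Pow N \<and> \<Union>CC = N}"
  let ?B = "{XX. XX \<subseteq> Fx x \<and> \<Union>XX - {x} = N}"
  have bij: "bij_betw (\<lambda>CC. insert x ` CC) ?A ?B"
  proof (rule bij_betw_byWitness[where f' = "\<lambda>XX. (\<lambda>X. X - {x}) ` XX"])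
    show "\<forall>CC\<in>?A. (\<lambda>X. X - {x}) ` insert x ` CC = CC"
    proof
      fix CC assume "CC \<in> ?A"
      then have "\<forall>C\<in>CC. x \<notin> C" using assms(1) by auto
      then have "(\<lambda>X. X - {x}) ` insert x ` CC = (\<lambda>C. C) ` CC"
        unfolding image_image by (intro image_cong) auto
      then show "(\<lambda>X. X - {x}) ` insert x ` CC = CC" by simp
    qed
    show "\<forall>XX\<in>?B. insert x ` (\<lambda>X. X - {x}) ` XX = XX"
    proof
      fix XX assume "XX \<in> ?B"
      then have "\<forall>X\<in>XX. x \<in> X" unfolding Fx_def by auto
      then have "insert x ` (\<lambda>X. X - {x}) ` XX = (\<lambda>X. X) ` XX"
        unfolding image_image by (intro image_cong) auto
      then show "insert x ` (\<lambda>X. X - {x}) ` XX = XX" by simp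
    qed
    show "(\<lambda>CC. insert x ` CC) ` ?A \<subseteq> ?B"
    proof
      fix XX assume "XX \<in> (\<lambda>CC. insert x ` CC) ` ?A"
      then obtain CC where CC: "CC \<subseteq> Pow N" "\<Union>CC = N" "XX = insert x ` CC" by auto
      have "XX \<subseteq> Fx x"
      proof
        fix X assume "X \<in> XX"
        then obtain C where C: "C \<in> CC" "X = insert x C" using CC(3) by auto
        then have "finite C" using CC(1) assms(2) by (meson PowD finite_subset subsetD)
        then show "X \<in> Fx x" unfolding Fx_def C(2) by simp
      qed
      moreover have "\<Union>XX - {x} = N"
      proof -
        have "\<Union>XX - {x} = \<Union>CC - {x}" unfolding CC(3) by blast
        then show ?thesis using CC(2) assms(1) by simp
      qed
      ultimately show "XX \<in> ?B" by simp
    qed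
    show "(\<lambda>XX. (\<lambda>X. X - {x}) ` XX) ` ?B \<subseteq> ?A"
    proof
      fix CC assume "CC \<in> (\<lambda>XX. (\<lambda>X. X - {x}) ` XX) ` ?B"
      then obtain XX where XX: "XX \<subseteq> Fx x" "\<Union>XX - {x} = N" "CC = (\<lambda>X. X - {x}) ` XX" by auto
      have "CC \<subseteq> Pow N" unfolding XX(3) using XX(2) by auto
      moreover have "\<Union>CC = N" unfolding XX(3) using XX(2) by auto
      ultimately show "CC \<in> ?A" by simp
    qed
  qed
  have "(\<Sum>XX\<in>?B. \<Prod>X\<in>XX. g X) = (\<Sum>CC\<in>?A. \<Prod>X\<in>insert x ` CC. g X)"
    using bij by (rule sum.reindex_bij_betw[symmetric])
  also have "\<dots> = (\<Sum>CC\<in>?A. \<Prod>C\<in>CC. g (insert x C))"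
  proof (rule sum.cong)
    fix CC assume "CC \<in> ?A"
    then have nx: "\<forall>C\<in>CC. x \<notin> C" using assms(1) by auto
    have "inj_on (insert x) CC"
    proof (rule inj_onI)
      fix A B assume "A \<in> CC" "B \<in> CC" "insert x A = insert x B"
      then show "A = B" using nx by (metis Diff_insert_absorb)
    qed
    then show "(\<Prod>X\<in>insert x ` CC. g X) = (\<Prod>C\<in>CC. g (insert x C))" by (simp add: prod.reindex)
  qed simp
  finally show ?thesis .
qed

theorem lemma6p4:
  fixes W :: "'a::countable set \<Rightarrow> complex"
    and r :: "'a \<Rightarrow> real"
    and x :: 'a
    and N :: "'a set"
  assumes r_range: "\<And>s. 0 \<le> r s \<and> r s < 1"
    and N_fin: "finite N"
    and x_notin: "x \<notin> N"
  shows "cmod (gamma W x N) * alpha_pow r N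
    \<le> (\<Sum>XX\<in>{XX. XX \<subseteq> Fx x \<and> \<Union>XX - {x} = N}.
          \<Prod>X\<in>XX. (maxterm W r x X - 1))"
proof -
  define w where "w = (\<lambda>C. if C = {} then 1 else W (insert x C))"
  define q where "q = (\<lambda>C. maxterm W r x (insert x C) - 1)"
  define p where "p = (\<lambda>C. if C = {} then 0 else q C)"
  define al where "al = alpha r"
  have al0: "\<And>s. 0 \<le> al s" unfolding al_def by (rule alpha_nonneg[of r, OF r_range])
  have g: "gamma W x N = W {x} * Dif (pf w) N {}"
  proof -
    have "gamma W x N = (\<Sum>M\<in>Pow N. (-1) ^ card (N - M) * (W {x} * pf w M))"
      unfolding gamma_def gamma_cond_def
    proof (rule sum.cong)
      fix M assume "M \<in> Pow N"
      then have "x \<notin> M" "finite M" using x_notin by (auto intro: finite_subset[OF _ N_fin])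
      then show "(-1) ^ card (N - M) * kappa_pt W x ({} \<union> M) = (-1) ^ card (N - M) * (W {x} * pf w M)"
        unfolding w_def by (simp add: kappa_pt_eq)
    qed simp
    then show ?thesis unfolding Dif_def by (simp add: sum_distrib_left algebra_simps)
  qed
  have mt: "cmod (W (insert x C)) \<le> maxterm W r x (insert x C)
      \<and> (\<forall>S. S \<subseteq> C \<longrightarrow> S \<noteq> {} \<longrightarrow> 1 + cmod (W (insert x C) - 1) * alpha_pow r S \<le> maxterm W r x (insert x C))"
    if C: "C \<subseteq> N" for C
  proof -
    have xC: "insert x C - {x} = C" using C x_notin by auto
    have fin: "finite (insert (cmod (W (insert x C)))
          ((\<lambda>S. 1 + cmod (W (insert x C) - 1) * alpha_pow r S) ` {S. S \<subseteq> insert x C - {x} \<and> S \<noteq> {}}))"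
    proof -
      have fC: "finite C" using C N_fin by (rule finite_subset)
      have "finite {S. S \<subseteq> C \<and> S \<noteq> {}}"
        by (rule finite_subset[of _ "Pow C"]) (use fC in auto)
      then show ?thesis unfolding xC by simp
    qed
    show ?thesis unfolding maxterm_def
      using Max_ge[OF fin] xC by auto
  qed
  have apos: "0 \<le> alpha_pow r S" for S
    unfolding alpha_pow_def by (rule prod_nonneg) (use al0 in \<open>simp add: al_def\<close>)
  have H: "H0 al ({} \<union> N) w p"
    unfolding H0_def
  proof (intro allI impI, intro conjI)
    fix C assume C: "C \<subseteq> {} \<union> N"
    then have CN: "C \<subseteq> N" by simp
    note mt1 = conjunct1[OF mt[OF CN]]
    have mt2: "1 + cmod (W (insert x C) - 1) * alpha_pow r S \<le> maxterm W r x (insert x C)"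
      if "S \<subseteq> C" "S \<noteq> {}" for S
      using conjunct2[OF mt[OF CN]] that by blast
    show "0 \<le> p C"
    proof (cases "C = {}")
      case False
      have "1 + cmod (W (insert x C) - 1) * alpha_pow r C \<le> maxterm W r x (insert x C)"
        using mt2[of C] False by simp
      moreover have "0 \<le> cmod (W (insert x C) - 1) * alpha_pow r C" using apos[of C] by simp
      ultimately show ?thesis unfolding p_def q_def using False by simp
    qed (simp add: p_def)
    show "cmod (w C) \<le> 1 + p C"
    proof (cases "C = {}")
      case False
      then show ?thesis using mt1 unfolding w_def p_def q_def by simp
    qed (simp add: p_def w_def)
    show "\<forall>S\<subseteq>C. S \<noteq> {} \<longrightarrow> cmod (w C - 1) * (\<Prod>s\<in>S. al s) \<le> p C"
    proof (intro allI impI)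
      fix S assume S: "S \<subseteq> C" "S \<noteq> {}"
      then have CE: "C \<noteq> {}" by auto
      have e1: "w C = W (insert x C)" "p C = maxterm W r x (insert x C) - 1"
        using CE unfolding w_def p_def q_def by auto
      have e2: "(\<Prod>s\<in>S. al s) = alpha_pow r S" unfolding al_def alpha_pow_def by simp
      show "cmod (w C - 1) * (\<Prod>s\<in>S. al s) \<le> p C"
        unfolding e1 e2 using mt2[OF S] by simp
    qed
  qed
  have main: "cmod (Dif (pf w) N {}) * (\<Prod>s\<in>N. al s) \<le> Dif (pf (\<lambda>C. 1 + p C)) N {}"
    using claim[OF al0 N_fin] H by auto
  have q0: "q {} + 1 = cmod (W {x})"
    unfolding q_def maxterm_def by simp
  have P: "(\<Sum>CC\<in>Pow (Pow M). \<Prod>C\<in>CC. q C) = cmod (W {x}) * pf (\<lambda>C. 1 + p C) M" if "finite M" for M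
  proof -
    have "(\<Sum>CC\<in>Pow (Pow M). \<Prod>C\<in>CC. q C) = (\<Prod>C\<in>Pow M. q C + 1)"
      using prod_add[of "Pow M" q "\<lambda>_. 1"] that by simp
    also have "\<dots> = (q {} + 1) * (\<Prod>C\<in>Pow M - {{}}. q C + 1)"
      using that by (intro prod.remove) auto
    also have "(\<Prod>C\<in>Pow M - {{}}. q C + 1) = (\<Prod>C\<in>Pow M - {{}}. 1 + p C)"
      unfolding p_def by (intro prod.cong) auto
    also have "\<dots> = pf (\<lambda>C. 1 + p C) M"
      unfolding pf_def using that by (subst (2) prod.remove[of _ "{}"]) (auto simp: p_def)
    finally show ?thesis using q0 by simp
  qed
  have rhs: "(\<Sum>XX\<in>{XX. XX \<subseteq> Fx x \<and> \<Union>XX - {x} = N}. \<Prod>X\<in>XX. (maxterm W r x X - 1))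
      = cmod (W {x}) * Dif (pf (\<lambda>C. 1 + p C)) N {}"
  proof -
    have "(\<Sum>XX\<in>{XX. XX \<subseteq> Fx x \<and> \<Union>XX - {x} = N}. \<Prod>X\<in>XX. (maxterm W r x X - 1))
        = (\<Sum>CC\<in>{CC. CC \<subseteq> Pow N \<and> \<Union>CC = N}. \<Prod>C\<in>CC. q C)"
      unfolding q_def by (rule reindex_families[OF x_notin N_fin])
    also have "{CC. CC \<subseteq> Pow N \<and> \<Union>CC = N} = {CC. CC \<subseteq> Pow ({} \<union> N) \<and> N \<subseteq> \<Union>CC}"
      by auto
    also have "(\<Sum>CC\<in>{CC. CC \<subseteq> Pow ({} \<union> N) \<and> N \<subseteq> \<Union>CC}. \<Prod>C\<in>CC. q C)
        = Dif (\<lambda>M. \<Sum>CC\<in>Pow (Pow M). \<Prod>C\<in>CC. q C) N {}"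
      using inversion[OF N_fin, of "{}" "\<lambda>CC. \<Prod>C\<in>CC. q C"] by simp
    also have "\<dots> = Dif (\<lambda>M. cmod (W {x}) * pf (\<lambda>C. 1 + p C) M) N {}"
      by (rule Dif_cong) (use P N_fin finite_subset in auto)
    also have "\<dots> = cmod (W {x}) * Dif (pf (\<lambda>C. 1 + p C)) N {}"
      by (rule Dif_scale)
    finally show ?thesis .
  qed
  have "cmod (gamma W x N) * alpha_pow r N = cmod (W {x}) * (cmod (Dif (pf w) N {}) * (\<Prod>s\<in>N. al s))"
    unfolding g alpha_pow_def al_def by (simp add: norm_mult)
  also have "\<dots> \<le> cmod (W {x}) * Dif (pf (\<lambda>C. 1 + p C)) N {}"
    using main by (intro mult_left_mono) auto
  finally show ?thesis unfolding rhs .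
qed

end
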